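(* Let $v\ge 0$ and consider $$\min_{y\in\mathbb{R}^{n^-}}\ -\sum_{i=1}^{n^-}\left(\frac{y_i}{\lambda}\right)^{1/\beta}\quad\text{s.t.}\quad y_1\ge y_2\ge\cdots\ge y_{n^-}\ge 0,\qquad \sum_{i=1}^{n^-}h^-_iy_i=v.$$ There exists an index $L\in\{1,\dots,n^-\}$ such that $y^*$ with $y^*_i=Y$ for $1\le i\le L$ and $y^*_i=0$ for $L+1\le i\le n^-$, where $Y:=v/\sum_{i=1}^{L}h^-_i\ (\ge 0)$, is a global optimum of this problem.
   Context: Fix $N\in\mathbb{N}$, $\beta\in(0,1)$, $\lambda>0$, and an integer $1\le n^-\le N$. A function $f:[0,1]\to\mathbb{R}$ is inverse S-shaped if it is strictly increasing, continuously differentiable, and there is $x_0\in[0,1]$ such that $f'$ is strictly decreasing on $[0,x_0]$ and strictly increasing on $[x_0,1]$. Let $W^-:[0,1]\to[0,1]$ be inverse S-shaped with $W^-(0)=0$, $W^-(1)=1$, and $h^-_i:=W^-\!\left(\frac{i}{N}\right)-W^-\!\left(\frac{i-1}{N}\right)$ for $i=1,\dots,n^-$. *)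

theory Defs
  imports "HOL-Analysis.Analysis"
begin

definition inverse_S_shaped :: "(real \<Rightarrow> real) \<Rightarrow> bool" where
  "inverse_S_shaped f \<longleftrightarrow>
     strict_mono_on {0..1} f \<and>
     (\<exists>f'. (\<forall>x\<in>{0..1}. (f has_real_derivative f' x) (at x within {0..1})) \<and>
           continuous_on {0..1} f' \<and>
           (\<exists>x0\<in>{0..1}.
              (\<forall>x\<in>{0..x0}. \<forall>y\<in>{0..x0}. x < y \<longrightarrow> f' y < f' x) \<and>
              strict_mono_on {x0..1} f'))"

definition hminus :: "(real \<Rightarrow> real) \<Rightarrow> nat \<Rightarrow> nat \<Rightarrow> real" where
  "hminus W N i = W (real i / real N) - W (real (i - 1) / real N)"

definition obj :: "real \<Rightarrow> real \<Rightarrow> nat \<Rightarrow> (nat \<Rightarrow> real) \<Rightarrow> real" where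
  "obj \<beta> lam n y = - (\<Sum>i=1..n. (y i / lam) powr (1 / \<beta>))"

definition feasible :: "(real \<Rightarrow> real) \<Rightarrow> nat \<Rightarrow> nat \<Rightarrow> real \<Rightarrow> (nat \<Rightarrow> real) \<Rightarrow> bool" where
  "feasible W N n v y \<longleftrightarrow>
     (\<forall>i\<in>{1..<n}. y (Suc i) \<le> y i) \<and> y n \<ge> 0 \<and>
     (\<Sum>i=1..n. hminus W N i * y i) = v"

end

theory Submission
  imports Defs
begin

lemma powr_convex0:
  fixes p :: real assumes p: "p \<ge> 1"
  shows "convex_on {0..} (\<lambda>x. x powr p)"
proof (rule convex_onI)
  fix t x y :: real
  assume t: "t > 0" "t < 1" and x: "x \<in> {0..}" and y: "y \<in> {0..}"
  have tp: "s powr p \<le> s" if "0 < s" "s < 1" for s :: real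
  proof -
    have "s powr p \<le> s powr 1" using that p by (intro powr_mono') auto
    thus ?thesis using that by simp
  qed
  show "((1 - t) *\<^sub>R x + t *\<^sub>R y) powr p \<le> (1 - t) * x powr p + t * y powr p"
  proof (cases "x = 0 \<or> y = 0")
    case True
    then show ?thesis
    proof
      assume "x = 0"
      then have "((1 - t) *\<^sub>R x + t *\<^sub>R y) powr p = t powr p * y powr p"
        using t y by (simp add: powr_mult)
      also have "\<dots> \<le> t * y powr p" using tp[of t] t by (intro mult_right_mono) auto
      finally show ?thesis using \<open>x = 0\<close> by simp
    next
      assume "y = 0"
      then have "((1 - t) *\<^sub>R x + t *\<^sub>R y) powr p = (1 - t) powr p * x powr p"
        using t x by (simp add: powr_mult)
      also have "\<dots> \<le> (1 - t) * x powr p" using tp[of "1 - t"] t by (intro mult_right_mono) auto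
      finally show ?thesis using \<open>y = 0\<close> by simp
    qed
  next
    case False
    then have "x \<in> {0<..}" "y \<in> {0<..}" using x y by auto
    from convex_onD[OF powr_convex[OF p], of t x y] this t show ?thesis by simp
  qed
qed (simp add: convex_real_interval)

lemma mono_chain:
  fixes y :: "nat \<Rightarrow> real"
  assumes "\<forall>i\<in>{1..<n}. y (Suc i) \<le> y i" "1 \<le> i" "i \<le> j" "j \<le> n"
  shows "y j \<le> y i"
  using assms(3,4)
proof (induction j rule: dec_induct)
  case base then show ?case by simp
next
  case (step m)
  then have "y (Suc m) \<le> y m" using assms(1,2) by auto
  with step show ?case by simp
qed

theorem theorem2:
  fixes N n :: nat and \<beta> lam v :: real and W :: "real \<Rightarrow> real"
  assumes "0 < \<beta>" "\<beta> < 1" "0 < lam"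
    and "1 \<le> n" "n \<le> N"
    and "inverse_S_shaped W" "W 0 = 0" "W 1 = 1"
    and "\<forall>x\<in>{0..1}. W x \<in> {0..1}"
    and "0 \<le> v"
  shows "\<exists>L\<in>{1..n}.
           (let Y = v / (\<Sum>i=1..L. hminus W N i);
                ystar = (\<lambda>i. if i \<le> L then Y else 0)
            in feasible W N n v ystar \<and>
               (\<forall>y. feasible W N n v y \<longrightarrow> obj \<beta> lam n ystar \<le> obj \<beta> lam n y))"
proof -
  define p where "p = 1 / \<beta>"
  have p1: "p \<ge> 1" using assms(1,2) by (simp add: p_def)
  define g where "g = (\<lambda>x::real. (x / lam) powr p)"
  have gconv: "convex_on {0..} g"
  proof -
    have "convex_on {0..} (\<lambda>x. x powr p / lam powr p)"
      by (intro convex_on_cdiv powr_convex0 p1) simp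
    moreover have "\<And>x. x \<in> {0..} \<Longrightarrow> x powr p / lam powr p = g x"
      using assms(3) by (simp add: g_def powr_divide)
    ultimately show ?thesis
    proof (intro convex_onI)
      fix t x y :: real
      assume c: "convex_on {0..} (\<lambda>x. x powr p / lam powr p)"
        and e: "\<And>x. x \<in> {0..} \<Longrightarrow> x powr p / lam powr p = g x"
        and t: "0 < t" "t < 1" and x: "x \<in> {0..}" and y: "y \<in> {0..}"
      have m: "(1 - t) *\<^sub>R x + t *\<^sub>R y \<in> {0..}" using t x y by simp
      show "g ((1 - t) *\<^sub>R x + t *\<^sub>R y) \<le> (1 - t) * g x + t * g y"
        using convex_onD[OF c, of t x y] t x y e[OF m] e[OF x] e[OF y] by simp
    qed (simp add: convex_real_interval)
  qed
  have gnn: "g x \<ge> 0" for x by (simp add: g_def)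
  have objg: "obj \<beta> lam n y = - (\<Sum>i=1..n. g (y i))" for y
    by (simp add: obj_def g_def p_def)
  have smono: "strict_mono_on {0..1} W" using assms(6) by (simp add: inverse_S_shaped_def)
  have hpos: "hminus W N i > 0" if "i \<in> {1..n}" for i
  proof -
    have N: "real N > 0" using assms(4,5) by simp
    have "real (i - 1) / real N < real i / real N" using that N
      by (intro divide_strict_right_mono) auto
    moreover have "real i / real N \<in> {0..1}" "real (i - 1) / real N \<in> {0..1}"
      using that assms(5) N by auto
    ultimately show ?thesis unfolding hminus_def using smono
      by (simp add: strict_mono_onD)
  qed
  define H where "H k = (\<Sum>i=1..k. hminus W N i)" for k
  have Hpos: "H k > 0" if "k \<in> {1..n}" for k
    unfolding H_def using that hpos by (intro sum_pos) auto
  define a where "a k i = (if i \<le> k then v / H k else 0)" for k i :: nat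
  define G where "G k = (\<Sum>i=1..n. g (a k i))" for k
  define M where "M = Max (G ` {1..n})"
  have "M \<in> G ` {1..n}" unfolding M_def using assms(4) by (intro Max_in) auto
  then obtain L where L: "L \<in> {1..n}" "G L = M" by auto
  have GL: "G k \<le> G L" if "k \<in> {1..n}" for k
    using L that unfolding M_def by (simp add: Max_ge)
  have ann: "a k i \<ge> 0" if "k \<in> {1..n}" for k i
    using Hpos[OF that] assms(10) by (simp add: a_def)
  have ystar_eq: "(\<lambda>i. if i \<le> L then v / (\<Sum>i=1..L. hminus W N i) else 0) = a L"
    by (auto simp: a_def H_def)
  have feasL: "feasible W N n v (a L)"
  proof -
    have "(\<Sum>i=1..n. hminus W N i * a L i) = (\<Sum>i=1..L. hminus W N i * a L i)"
      using L by (intro sum.mono_neutral_right) (auto simp: a_def)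
    also have "\<dots> = (\<Sum>i=1..L. hminus W N i * (v / H L))"
      by (intro sum.cong) (auto simp: a_def)
    also have "\<dots> = H L * (v / H L)" by (simp add: H_def sum_distrib_right sum_divide_distrib)
    also have "\<dots> = v" using Hpos[OF L(1)] by simp
    finally have "(\<Sum>i=1..n. hminus W N i * a L i) = v" .
    moreover have "\<forall>i\<in>{1..<n}. a L (Suc i) \<le> a L i"
      using ann[OF L(1), of 1] L by (auto simp: a_def)
    moreover have "a L n \<ge> 0" using ann[OF L(1)] .
    ultimately show ?thesis by (simp add: feasible_def)
  qed
  have opt: "obj \<beta> lam n (a L) \<le> obj \<beta> lam n y" if fy: "feasible W N n v y" for y
  proof -
    have dec: "\<forall>i\<in>{1..<n}. y (Suc i) \<le> y i" and yn: "y n \<ge> 0"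
      and vs: "(\<Sum>i=1..n. hminus W N i * y i) = v"
      using fy by (auto simp: feasible_def)
    have ynn: "y i \<ge> 0" if "i \<in> {1..n}" for i
      using mono_chain[OF dec, of i n] that yn by auto
    define z where "z k = (if k \<le> n then y k else 0)" for k
    define c where "c k = z k - z (Suc k)" for k
    have cnn: "c k \<ge> 0" if "k \<in> {1..n}" for k
    proof (cases "k < n")
      case True then show ?thesis using dec that by (auto simp: c_def z_def)
    next
      case False then show ?thesis using that yn by (auto simp: c_def z_def)
    qed
    have ysum: "y i = (\<Sum>k=1..n. if i \<le> k then c k else 0)" if i: "i \<in> {1..n}" for i
    proof -
      have "(\<Sum>k=1..n. if i \<le> k then c k else 0) = (\<Sum>k=i..n. if i \<le> k then c k else 0)"
        using i by (intro sum.mono_neutral_right) auto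
      also have "\<dots> = (\<Sum>k=i..n. (\<lambda>k. - z k) (Suc k) - (\<lambda>k. - z k) k)"
        by (intro sum.cong) (auto simp: c_def)
      also have "\<dots> = z i - z (Suc n)" using i by (subst sum_Suc_diff) auto
      also have "\<dots> = y i" using i by (simp add: z_def)
      finally show ?thesis by simp
    qed
    have vc: "v = (\<Sum>k=1..n. c k * H k)"
    proof -
      have "v = (\<Sum>i=1..n. hminus W N i * (\<Sum>k=1..n. if i \<le> k then c k else 0))"
        using vs ysum by (metis (no_types, lifting) sum.cong)
      also have "\<dots> = (\<Sum>i=1..n. \<Sum>k=1..n. if i \<le> k then c k * hminus W N i else 0)"
        by (simp add: sum_distrib_left mult.commute if_distrib cong: if_cong)
      also have "\<dots> = (\<Sum>k=1..n. \<Sum>i=1..n. if i \<le> k then c k * hminus W N i else 0)"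
        by (rule sum.swap)
      also have "\<dots> = (\<Sum>k=1..n. c k * H k)"
      proof (intro sum.cong refl)
        fix k assume k: "k \<in> {1..n}"
        have "(\<Sum>i=1..n. if i \<le> k then c k * hminus W N i else 0)
            = (\<Sum>i=1..k. if i \<le> k then c k * hminus W N i else 0)"
          using k by (intro sum.mono_neutral_right) auto
        also have "\<dots> = c k * H k" by (simp add: H_def sum_distrib_left)
        finally show "(\<Sum>i=1..n. if i \<le> k then c k * hminus W N i else 0) = c k * H k" .
      qed
      finally show ?thesis .
    qed
    show ?thesis
    proof (cases "v = 0")
      case True
      have "\<forall>k\<in>{1..n}. c k * H k = 0"
        using vc True cnn Hpos by (subst sum_nonneg_eq_0_iff[symmetric]) (auto intro: sum_nonneg simp: less_imp_le)
      then have c0: "c k = 0" if "k \<in> {1..n}" for k using Hpos[OF that] that by auto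
      have "y i = 0" if "i \<in> {1..n}" for i using ysum[OF that] c0 by (simp add: sum.neutral)
      then have "obj \<beta> lam n y = 0" by (simp add: objg g_def)
      moreover have "obj \<beta> lam n (a L) \<le> 0" unfolding objg using gnn by (simp add: sum_nonneg)
      ultimately show ?thesis by simp
    next
      case False
      then have vpos: "v > 0" using assms(10) by simp
      define t where "t k = c k * H k / v" for k
      have tnn: "t k \<ge> 0" if "k \<in> {1..n}" for k
        using cnn[OF that] Hpos[OF that] vpos by (simp add: t_def)
      have tsum: "(\<Sum>k=1..n. t k) = 1"
        using vc vpos by (simp add: t_def sum_divide_distrib[symmetric])
      have yi: "y i = (\<Sum>k=1..n. t k *\<^sub>R a k i)" if "i \<in> {1..n}" for i
      proof -
        have "(\<Sum>k=1..n. t k *\<^sub>R a k i) = (\<Sum>k=1..n. if i \<le> k then c k else 0)"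
        proof (intro sum.cong refl)
          fix k assume k: "k \<in> {1..n}"
          have "H k \<noteq> 0" using Hpos[OF k] by simp
          then show "t k *\<^sub>R a k i = (if i \<le> k then c k else 0)"
            using vpos by (simp add: t_def a_def)
        qed
        then show ?thesis using ysum[OF that] by simp
      qed
      have jen: "g (y i) \<le> (\<Sum>k=1..n. t k * g (a k i))" if "i \<in> {1..n}" for i
        unfolding yi[OF that]
        using assms(4) tsum tnn ann by (intro convex_on_sum[OF _ _ gconv]) auto
      have "(\<Sum>i=1..n. g (y i)) \<le> (\<Sum>i=1..n. \<Sum>k=1..n. t k * g (a k i))"
        using jen by (intro sum_mono) auto
      also have "\<dots> = (\<Sum>k=1..n. t k * G k)"
        by (subst sum.swap) (simp add: G_def sum_distrib_left)
      also have "\<dots> \<le> (\<Sum>k=1..n. t k * G L)"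
        using tnn GL by (intro sum_mono mult_left_mono) auto
      also have "\<dots> = G L" using tsum by (simp add: sum_distrib_right[symmetric])
      finally show ?thesis by (simp add: objg G_def)
    qed
  qed
  show ?thesis
    unfolding Let_def
  proof (rule bexI[OF _ L(1)])
    show "feasible W N n v (\<lambda>i. if i \<le> L then v / (\<Sum>i=1..L. hminus W N i) else 0) \<and>
      (\<forall>y. feasible W N n v y \<longrightarrow>
        obj \<beta> lam n (\<lambda>i. if i \<le> L then v / (\<Sum>i=1..L. hminus W N i) else 0) \<le> obj \<beta> lam n y)"
      unfolding ystar_eq using feasL opt by blast
  qed
qed

end
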